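(* The Kudryashov–Sinelshchikov equation $$u_t+uu_x-(1+u)u_{xx}-u_x^2=0$$ is nonlinearly self-adjoint with the substitution $$\phi(t,x,u)=c_1\exp(-t-x)+c_2,$$ where $c_1,c_2$ are constants with $(c_1,c_2)\neq(0,0)$. It is not strictly self-adjoint.
   Context: For a differential equation $\mathfrak{F}[u]=0$ in independent variables $t,x$ and dependent variable $u$, introduce a new dependent variable $\nu=\nu(t,x)$. The formal Lagrangian is $\mathfrak{L}=\nu\mathfrak{F}$ and the adjoint is $\mathfrak{F}^*=\frac{\delta\mathfrak{L}}{\delta u}$, where $\frac{\delta}{\delta u}=\frac{\partial}{\partial u}-D_t\frac{\partial}{\partial u_t}-D_x\frac{\partial}{\partial u_x}+D_x^2\frac{\partial}{\partial u_{xx}}$ and $D_t,D_x$ are total derivatives. The equation is nonlinearly self-adjoint if there is a substitution $\nu=\phi(t,x,u)\neq 0$ (derivatives of $\nu$ replaced by total derivatives of $\phi$) such that $\mathfrak{F}^*|_{\nu=\phi}=\lambda\mathfrak{F}$ for some coefficient $\lambda=\lambda(t,x,u,\dots)$; it is strictly self-adjoint if this holds with $\phi=u$. *)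

theory Defs
  imports "HOL-Analysis.Analysis"
begin

definition pdt :: "(real \<Rightarrow> real \<Rightarrow> real) \<Rightarrow> real \<Rightarrow> real \<Rightarrow> real" where
  "pdt f t x = deriv (\<lambda>s. f s x) t"

definition pdx :: "(real \<Rightarrow> real \<Rightarrow> real) \<Rightarrow> real \<Rightarrow> real \<Rightarrow> real" where
  "pdx f t x = deriv (\<lambda>y. f t y) x"

definition jet :: "(real \<Rightarrow> real \<Rightarrow> real) \<Rightarrow> nat \<Rightarrow> nat \<Rightarrow> real \<Rightarrow> real \<Rightarrow> real" where
  "jet u i j = (pdt ^^ i) ((pdx ^^ j) u)"

definition smooth2 :: "(real \<Rightarrow> real \<Rightarrow> real) \<Rightarrow> bool" where
  "smooth2 u \<longleftrightarrow> (\<forall>i j p. (\<lambda>q. jet u i j (fst q) (snd q)) differentiable (at p))"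

text \<open>Differential functions of order 2 in the jet variables (t, x, u, u_t, u_x, u_xx),
  and their evaluation along a function u (t,x).\<close>

type_synonym dfun = "real \<Rightarrow> real \<Rightarrow> real \<Rightarrow> real \<Rightarrow> real \<Rightarrow> real \<Rightarrow> real"

definition eval_df :: "dfun \<Rightarrow> (real \<Rightarrow> real \<Rightarrow> real) \<Rightarrow> real \<Rightarrow> real \<Rightarrow> real" where
  "eval_df F u t x = F t x (u t x) (pdt u t x) (pdx u t x) (pdx (pdx u) t x)"

text \<open>Variational derivative delta/delta u of a Lagrangian
  L(t, x, u, u_t, u_x, u_xx, nu), evaluated along functions u(t,x) and nu(t,x);
  total derivatives D_t, D_x are realised as partial derivatives of the composition
  with u and nu.\<close>

definition var_deriv ::
  "(real \<Rightarrow> real \<Rightarrow> real \<Rightarrow> real \<Rightarrow> real \<Rightarrow> real \<Rightarrow> real \<Rightarrow> real)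
   \<Rightarrow> (real \<Rightarrow> real \<Rightarrow> real) \<Rightarrow> (real \<Rightarrow> real \<Rightarrow> real) \<Rightarrow> real \<Rightarrow> real \<Rightarrow> real" where
  "var_deriv L u \<nu> =
    (let ut = pdt u; ux = pdx u; uxx = pdx (pdx u);
         L_u = (\<lambda>t x. deriv (\<lambda>w. L t x w (ut t x) (ux t x) (uxx t x) (\<nu> t x)) (u t x));
         L_ut = (\<lambda>t x. deriv (\<lambda>w. L t x (u t x) w (ux t x) (uxx t x) (\<nu> t x)) (ut t x));
         L_ux = (\<lambda>t x. deriv (\<lambda>w. L t x (u t x) (ut t x) w (uxx t x) (\<nu> t x)) (ux t x));
         L_uxx = (\<lambda>t x. deriv (\<lambda>w. L t x (u t x) (ut t x) (ux t x) w (\<nu> t x)) (uxx t x))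
     in (\<lambda>t x. L_u t x - pdt L_ut t x - pdx L_ux t x + pdx (pdx L_uxx) t x))"

definition formal_lagrangian ::
  "dfun \<Rightarrow> real \<Rightarrow> real \<Rightarrow> real \<Rightarrow> real \<Rightarrow> real \<Rightarrow> real \<Rightarrow> real \<Rightarrow> real" where
  "formal_lagrangian F t x w wt wx wxx v = v * F t x w wt wx wxx"

definition adjoint :: "dfun \<Rightarrow> (real \<Rightarrow> real \<Rightarrow> real) \<Rightarrow> (real \<Rightarrow> real \<Rightarrow> real) \<Rightarrow> real \<Rightarrow> real \<Rightarrow> real" where
  "adjoint F u \<nu> = var_deriv (formal_lagrangian F) u \<nu>"

text \<open>Self-adjointness with substitution nu = phi(t,x,u): phi is not identically zero and
  there is a coefficient lambda, a function of t, x and finitely many derivatives of u,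
  with F^*|_{nu = phi} = lambda F identically (for every smooth u, at every point).\<close>

definition self_adjoint_with :: "dfun \<Rightarrow> (real \<Rightarrow> real \<Rightarrow> real \<Rightarrow> real) \<Rightarrow> bool" where
  "self_adjoint_with F \<phi> \<longleftrightarrow>
     \<phi> \<noteq> (\<lambda>t x w. 0) \<and>
     (\<exists>lam :: real \<Rightarrow> real \<Rightarrow> (nat \<Rightarrow> nat \<Rightarrow> real) \<Rightarrow> real.
        (\<exists>N. \<forall>t x J J'. (\<forall>i j. i + j \<le> N \<longrightarrow> J i j = J' i j) \<longrightarrow> lam t x J = lam t x J') \<and>
        (\<forall>u. smooth2 u \<longrightarrow> (\<forall>t x.
            adjoint F u (\<lambda>t x. \<phi> t x (u t x)) t x
              = lam t x (\<lambda>i j. jet u i j t x) * eval_df F u t x)))"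

definition nonlinearly_self_adjoint :: "dfun \<Rightarrow> bool" where
  "nonlinearly_self_adjoint F \<longleftrightarrow> (\<exists>\<phi>. self_adjoint_with F \<phi>)"

definition strictly_self_adjoint :: "dfun \<Rightarrow> bool" where
  "strictly_self_adjoint F \<longleftrightarrow> self_adjoint_with F (\<lambda>t x w. w)"

definition KS :: dfun where
  "KS t x u ut ux uxx = ut + u * ux - (1 + u) * uxx - ux ^ 2"

end

theory Submission
  imports Defs
begin

lemma partial_x:
  assumes "(\<lambda>q. f (fst q) (snd q)) differentiable (at (t, x))"
  shows "((\<lambda>y. f t y) has_real_derivative pdx f t x) (at x)"
proof -
  have "(\<lambda>y::real. (t, y)) differentiable (at x)"
    by (intro differentiable_Pair differentiable_const differentiable_ident)
  moreover have "(\<lambda>q. f (fst q) (snd q)) differentiable (at ((\<lambda>y. (t, y)) x))"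
    using assms by simp
  ultimately have "((\<lambda>q. f (fst q) (snd q)) \<circ> (\<lambda>y. (t, y))) differentiable (at x)"
    by (rule differentiable_chain_at)
  hence "(\<lambda>y. f t y) differentiable (at x)" by (simp add: o_def)
  thus ?thesis unfolding pdx_def
    using DERIV_deriv_iff_real_differentiable by blast
qed

lemma jet_x_deriv:
  assumes "smooth2 u"
  shows "((\<lambda>y. (pdx ^^ j) u t y) has_real_derivative (pdx ^^ Suc j) u t x) (at x)"
proof -
  have "(\<lambda>q. jet u 0 j (fst q) (snd q)) differentiable (at (t, x))"
    using assms unfolding smooth2_def by blast
  hence "(\<lambda>q. (pdx ^^ j) u (fst q) (snd q)) differentiable (at (t, x))"
    by (simp add: jet_def)
  from partial_x[OF this] show ?thesis by simp
qed

lemma ux_deriv: "smooth2 u \<Longrightarrow> ((\<lambda>y. u t y) has_real_derivative pdx u t x) (at x)"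
  using jet_x_deriv[of u 0] by simp

lemma uxx_deriv: "smooth2 u \<Longrightarrow> ((\<lambda>y. pdx u t y) has_real_derivative pdx (pdx u) t x) (at x)"
  using jet_x_deriv[of u 1] by simp


lemma d1: "deriv (\<lambda>w. (v::real) * (a + w * b - (1 + w) * c - b ^ 2)) z = v * (b - c)"
  by (rule DERIV_imp_deriv) (auto intro!: derivative_eq_intros simp: algebra_simps)
lemma d2: "deriv (\<lambda>w. (v::real) * (w + p * b - (1 + p) * c - b ^ 2)) z = v"
  by (rule DERIV_imp_deriv) (auto intro!: derivative_eq_intros simp: algebra_simps)
lemma d3: "deriv (\<lambda>w. (v::real) * (a + p * w - (1 + p) * c - w ^ 2)) z = v * (p - 2 * z)"
  by (rule DERIV_imp_deriv) (auto intro!: derivative_eq_intros simp: algebra_simps)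
lemma d4: "deriv (\<lambda>w. (v::real) * (a + p * b - (1 + p) * w - b ^ 2)) z = - (v * (1 + p))"
  by (rule DERIV_imp_deriv) (auto intro!: derivative_eq_intros simp: algebra_simps)

lemma adj_formula: "adjoint KS u \<nu> = (\<lambda>t x. \<nu> t x * (pdx u t x - pdx (pdx u) t x) - pdt \<nu> t x
   - pdx (\<lambda>t x. \<nu> t x * (u t x - 2 * pdx u t x)) t x
   + pdx (pdx (\<lambda>t x. - (\<nu> t x * (1 + u t x)))) t x)"
  unfolding adjoint_def var_deriv_def Let_def formal_lagrangian_def KS_def
  by (simp only: d1 d2 d3 d4)

lemma main1:
  fixes c1 c2 :: real
  assumes "smooth2 u"
  shows "adjoint KS u (\<lambda>t x. c1 * exp (- t - x) + c2) t x = 0"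
proof -
  define \<nu> where "\<nu> = (\<lambda>t x. c1 * exp (- t - x) + c2)"
  have ut: "pdt \<nu> t x = - (c1 * exp (- t - x))" for t x
    unfolding pdt_def \<nu>_def
    by (rule DERIV_imp_deriv) (auto intro!: derivative_eq_intros)
  have dux: "((\<lambda>y. u t y) has_real_derivative pdx u t y) (at y)" for t y
    using ux_deriv[OF assms] .
  have duxx: "((\<lambda>y. pdx u t y) has_real_derivative pdx (pdx u) t y) (at y)" for t y
    using uxx_deriv[OF assms] .
  have p1: "pdx (\<lambda>t x. \<nu> t x * (u t x - 2 * pdx u t x)) t x =
     - (c1 * exp (- t - x)) * (u t x - 2 * pdx u t x) + \<nu> t x * (pdx u t x - 2 * pdx (pdx u) t x)"
    apply (rule trans[OF pdx_def])
    unfolding \<nu>_def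
    by (rule DERIV_imp_deriv) (auto intro!: derivative_eq_intros dux duxx)
  have p2: "pdx (\<lambda>t x. - (\<nu> t x * (1 + u t x))) = (\<lambda>t x. c1 * exp (- t - x) * (1 + u t x) - \<nu> t x * pdx u t x)"
    apply (intro ext)
    apply (rule trans[OF pdx_def])
    unfolding \<nu>_def
    by (rule DERIV_imp_deriv) (auto intro!: derivative_eq_intros dux duxx)
  have p3: "pdx (\<lambda>t x. c1 * exp (- t - x) * (1 + u t x) - \<nu> t x * pdx u t x) t x
     = - (c1 * exp (- t - x)) * (1 + u t x) + c1 * exp (- t - x) * pdx u t x
       + c1 * exp (- t - x) * pdx u t x - \<nu> t x * pdx (pdx u) t x"
    apply (rule trans[OF pdx_def])
    unfolding \<nu>_def
    by (rule DERIV_imp_deriv) (auto intro!: derivative_eq_intros dux duxx)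
  have "adjoint KS u \<nu> t x = 0"
    unfolding adj_formula
    by (simp only: ut p1 p2 p3) (simp add: \<nu>_def algebra_simps)
  thus ?thesis by (simp add: \<nu>_def)
qed


lemma lin_pdx: "pdx (\<lambda>t x. a * x + b) = (\<lambda>t x. 0 * x + (a::real))"
  by (intro ext, unfold pdx_def, rule DERIV_imp_deriv) (auto intro!: derivative_eq_intros)

lemma lin_pdt: "pdt (\<lambda>t x. a * x + b) = (\<lambda>t x. 0 * x + (0::real))"
  by (intro ext, unfold pdt_def, rule DERIV_imp_deriv) (auto intro!: derivative_eq_intros)

lemma lin_pdx_pow: "\<exists>a b. (pdx ^^ j) (\<lambda>t x. x) = (\<lambda>t x. a * x + (b::real))"
proof (induction j)
  case 0
  show ?case by (rule exI[of _ 1], rule exI[of _ 0]) simp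
next
  case (Suc j)
  then obtain a b where "(pdx ^^ j) (\<lambda>t x. x) = (\<lambda>t x. a * x + (b::real))" by blast
  then show ?case by (intro exI[of _ 0] exI[of _ a]) (simp add: lin_pdx)
qed

lemma lin_pdt_pow: "\<exists>a b. (pdt ^^ i) (\<lambda>t x. a0 * x + b0) = (\<lambda>t x. a * x + (b::real))"
proof (induction i)
  case 0
  show ?case by (intro exI[of _ a0] exI[of _ b0]) simp
next
  case (Suc i)
  then obtain a b where "(pdt ^^ i) (\<lambda>t x. a0 * x + b0) = (\<lambda>t x. a * x + (b::real))" by blast
  then show ?case by (intro exI[of _ 0] exI[of _ 0]) (simp add: lin_pdt)
qed

lemma smooth_x: "smooth2 (\<lambda>t x. x)"
  unfolding smooth2_def
proof (intro allI)
  fix i j p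
  obtain a0 b0 where h0: "(pdx ^^ j) (\<lambda>t x. x) = (\<lambda>t x. a0 * x + (b0::real))"
    using lin_pdx_pow by blast
  obtain a b where h1: "(pdt ^^ i) (\<lambda>t x. a0 * x + b0) = (\<lambda>t x. a * x + (b::real))"
    using lin_pdt_pow by blast
  have "jet (\<lambda>t x. x) i j = (\<lambda>t x. a * x + b)" unfolding jet_def h0 h1 ..
  then show "(\<lambda>q. jet (\<lambda>t x. x) i j (fst q) (snd q)) differentiable at p"
    by (simp add: differentiable_def) (auto intro!: derivative_eq_intros)
qed

lemma not_strict: "\<not> strictly_self_adjoint KS"
proof
  assume "strictly_self_adjoint KS"
  then obtain lam where H: "\<And>u t x. smooth2 u \<Longrightarrow>
            adjoint KS u (\<lambda>t x. u t x) t x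
              = lam t x (\<lambda>i j. jet u i j t x) * eval_df KS u t x"
    unfolding strictly_self_adjoint_def self_adjoint_with_def by blast
  define u0 :: "real \<Rightarrow> real \<Rightarrow> real" where "u0 = (\<lambda>t x. x)"
  have s: "smooth2 u0" using smooth_x u0_def by simp
  have e1: "pdx u0 = (\<lambda>t x. 1)" unfolding u0_def
    by (intro ext, unfold pdx_def, rule DERIV_imp_deriv) (auto intro!: derivative_eq_intros)
  have e2: "pdx (\<lambda>t x. 1) = (\<lambda>t x. (0::real))"
    by (intro ext, unfold pdx_def, rule DERIV_imp_deriv) (auto intro!: derivative_eq_intros)
  have e3: "pdt u0 = (\<lambda>t x. 0)" unfolding u0_def
    by (intro ext, unfold pdt_def, rule DERIV_imp_deriv) (auto intro!: derivative_eq_intros)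
  have e4: "pdt u0 t x = 0" for t x using e3 by simp
  have e5: "pdx (\<lambda>t x. x * (x - 2)) t x = 2 * x - (2::real)" for t x
    by (unfold pdx_def, rule DERIV_imp_deriv) (auto intro!: derivative_eq_intros simp: algebra_simps)
  have e6: "pdx (\<lambda>t x. - (x * (1 + x))) = (\<lambda>t x. - 1 - 2 * (x::real))"
    by (intro ext, unfold pdx_def, rule DERIV_imp_deriv) (auto intro!: derivative_eq_intros simp: algebra_simps)
  have e7: "pdx (\<lambda>t x. - 1 - 2 * x) t x = - 2" for t x
    by (unfold pdx_def, rule DERIV_imp_deriv) (auto intro!: derivative_eq_intros)
  have "adjoint KS u0 u0 0 1 = -1"
    unfolding adj_formula e1 e2 e4 by (simp add: e5 e6 e7 u0_def)
  moreover have "eval_df KS u0 0 1 = 0"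
    unfolding eval_df_def KS_def e1 e2 e4 by (simp add: u0_def)
  moreover have "adjoint KS u0 (\<lambda>t x. u0 t x) 0 1 = lam 0 1 (\<lambda>i j. jet u0 i j 0 1) * eval_df KS u0 0 1"
    using H[OF s] .
  ultimately show False by simp
qed

lemma part1:
  fixes c1 c2 :: real
  assumes "(c1, c2) \<noteq> (0, 0)"
  shows "self_adjoint_with KS (\<lambda>t x w. c1 * exp (- t - x) + c2)"
  unfolding self_adjoint_with_def
proof (intro conjI)
  show "(\<lambda>t x w. c1 * exp (- t - x) + c2) \<noteq> (\<lambda>t x w. 0)"
  proof
    assume "(\<lambda>t x w. c1 * exp (- t - x) + c2) = (\<lambda>t x w. 0)"
    hence a: "c1 * exp (- t - x) + c2 = 0" for t x by (metis)
    have "c1 + c2 = 0" using a[of 0 0] by simp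
    moreover have "c1 * exp 1 + c2 = 0" using a[of "-1" 0] by simp
    ultimately have "c1 * exp 1 - c1 = 0" by linarith
    hence "c1 * (exp 1 - 1) = 0" by (simp add: right_diff_distrib)
    hence "c1 = 0" by simp
    with \<open>c1 + c2 = 0\<close> assms show False by simp
  qed
  show "\<exists>lam :: real \<Rightarrow> real \<Rightarrow> (nat \<Rightarrow> nat \<Rightarrow> real) \<Rightarrow> real.
        (\<exists>N. \<forall>t x J J'. (\<forall>i j. i + j \<le> N \<longrightarrow> J i j = J' i j) \<longrightarrow> lam t x J = lam t x J') \<and>
        (\<forall>u. smooth2 u \<longrightarrow> (\<forall>t x.
            adjoint KS u (\<lambda>t x. (\<lambda>t x w. c1 * exp (- t - x) + c2) t x (u t x)) t x
              = lam t x (\<lambda>i j. jet u i j t x) * eval_df KS u t x))"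
    by (rule exI[of _ "\<lambda>t x J. 0"]) (simp add: main1)
qed

theorem corollary3:
  shows "(\<forall>c1 c2 :: real. (c1, c2) \<noteq> (0, 0) \<longrightarrow>
            self_adjoint_with KS (\<lambda>t x w. c1 * exp (- t - x) + c2))
         \<and> \<not> strictly_self_adjoint KS"
  using part1 not_strict by blast

end
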